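(* Assume A2, let $x\in\mathcal I$ and suppose the $x$-threshold word $\pi$ exists. Then $\pi$ is a valid word.
   Context: Words are finite strings over $\{0,1\}$; $w^\omega$ is the infinite repetition of $w$. Let $\mathcal I\subseteq\mathbb R$ be an interval and $\phi_0,\phi_1:\mathcal I\to\mathcal I$. For a word $w$ put $\phi_w:=\phi_{w_{|w|}}\circ\cdots\circ\phi_{w_1}$ (first letter applied first), $\phi_\epsilon=\mathrm{id}$. Assumption A2: for all $x<y$ in $\mathcal I$ and $k\in\{0,1\}$, $\phi_k(x)<\phi_k(y)$ and $\phi_k(y)-\phi_k(x)<y-x$; moreover $\phi_0,\phi_1$ have fixed points $y_0,y_1\in\mathcal I$ with $y_1<y_0$. The $x$-threshold orbit is the sequence $(x_k)_{k\ge1}$ with $x_1=\phi_1(x)$ and $x_{k+1}=\phi_1(x_k)$ if $x_k\ge x$, $x_{k+1}=\phi_0(x_k)$ if $x_k<x$. The $x$-threshold word is the shortest non-empty finite word $\pi$ such that $x_{k+1}=\phi_{(\pi^\omega)_k}(x_k)$ for all $k\ge1$, when such a word exists. For $p\ge1$, $L_p$ and $R_p$ are the word morphisms determined by $L_p(0)=0^{p+1}1$, $L_p(1)=0^p1$, $R_p(0)=01^p$, $R_p(1)=01^{p+1}$. The set of valid words is the smallest set of words containing $0$ and $1$ and closed under $L_p$ and $R_p$ for all $p\ge1$ (these are exactly the Christoffel words). *)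

theory Defs
  imports "HOL-Analysis.Analysis"
begin

definition letter_map :: "(real \<Rightarrow> real) \<Rightarrow> (real \<Rightarrow> real) \<Rightarrow> nat \<Rightarrow> real \<Rightarrow> real" where
  "letter_map phi0 phi1 a = (if a = 0 then phi0 else phi1)"

text \<open>The x-threshold orbit, 0-indexed: thr_orbit phi0 phi1 x k is the paper's x_(k+1).\<close>
fun thr_orbit :: "(real \<Rightarrow> real) \<Rightarrow> (real \<Rightarrow> real) \<Rightarrow> real \<Rightarrow> nat \<Rightarrow> real" where
  "thr_orbit phi0 phi1 x 0 = phi1 x"
| "thr_orbit phi0 phi1 x (Suc k) =
     (if thr_orbit phi0 phi1 x k \<ge> x then phi1 (thr_orbit phi0 phi1 x k)
      else phi0 (thr_orbit phi0 phi1 x k))"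

definition drives_orbit :: "(real \<Rightarrow> real) \<Rightarrow> (real \<Rightarrow> real) \<Rightarrow> real \<Rightarrow> nat list \<Rightarrow> bool" where
  "drives_orbit phi0 phi1 x w \<longleftrightarrow>
     w \<noteq> [] \<and> set w \<subseteq> {0, 1} \<and>
     (\<forall>j. thr_orbit phi0 phi1 x (Suc j) =
           letter_map phi0 phi1 (w ! (j mod length w)) (thr_orbit phi0 phi1 x j))"

definition is_threshold_word :: "(real \<Rightarrow> real) \<Rightarrow> (real \<Rightarrow> real) \<Rightarrow> real \<Rightarrow> nat list \<Rightarrow> bool" where
  "is_threshold_word phi0 phi1 x tw \<longleftrightarrow>
     drives_orbit phi0 phi1 x tw \<and>
     (\<forall>w. drives_orbit phi0 phi1 x w \<longrightarrow> length tw \<le> length w)"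

definition morphL :: "nat \<Rightarrow> nat list \<Rightarrow> nat list" where
  "morphL p w = concat (map (\<lambda>a. if a = 0 then replicate (p + 1) 0 @ [1] else replicate p 0 @ [1]) w)"

definition morphR :: "nat \<Rightarrow> nat list \<Rightarrow> nat list" where
  "morphR p w = concat (map (\<lambda>a. if a = 0 then 0 # replicate p 1 else 0 # replicate (p + 1) 1) w)"

inductive valid_word :: "nat list \<Rightarrow> bool" where
  valid_zero: "valid_word [0]"
| valid_one: "valid_word [1]"
| valid_L: "valid_word w \<Longrightarrow> p \<ge> 1 \<Longrightarrow> valid_word (morphL p w)"
| valid_R: "valid_word w \<Longrightarrow> p \<ge> 1 \<Longrightarrow> valid_word (morphR p w)"

definition assumption_A2 :: "real set \<Rightarrow> (real \<Rightarrow> real) \<Rightarrow> (real \<Rightarrow> real) \<Rightarrow> bool" where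
  "assumption_A2 I phi0 phi1 \<longleftrightarrow>
     (\<forall>x\<in>I. \<forall>y\<in>I. x < y \<longrightarrow>
        phi0 x < phi0 y \<and> phi0 y - phi0 x < y - x \<and>
        phi1 x < phi1 y \<and> phi1 y - phi1 x < y - x) \<and>
     (\<exists>y0\<in>I. \<exists>y1\<in>I. phi0 y0 = y0 \<and> phi1 y1 = y1 \<and> y1 < y0)"

end

theory Submission
  imports Defs
begin


definition contr :: "real set \<Rightarrow> (real\<Rightarrow>real) \<Rightarrow> bool" where
 "contr I f \<longleftrightarrow> (\<forall>a\<in>I. \<forall>b\<in>I. a < b \<longrightarrow> f a < f b \<and> f b - f a < b - a)"

definition wcontr :: "real set \<Rightarrow> (real\<Rightarrow>real) \<Rightarrow> bool" where
 "wcontr I f \<longleftrightarrow> (\<forall>a\<in>I. \<forall>b\<in>I. a < b \<longrightarrow> f a < f b \<and> f b - f a \<le> b - a)"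

definition maps :: "real set \<Rightarrow> (real\<Rightarrow>real) \<Rightarrow> bool" where
 "maps I f \<longleftrightarrow> (\<forall>y\<in>I. f y \<in> I)"

lemma contr_wcontr: "contr I f \<Longrightarrow> wcontr I f"
  unfolding contr_def wcontr_def by force

lemma wcontr_less_iff: "wcontr I f \<Longrightarrow> a \<in> I \<Longrightarrow> b \<in> I \<Longrightarrow> f a < f b \<longleftrightarrow> a < b"
  unfolding wcontr_def by (smt (verit))

lemma wcontr_le_iff: "wcontr I f \<Longrightarrow> a \<in> I \<Longrightarrow> b \<in> I \<Longrightarrow> f a \<le> f b \<longleftrightarrow> a \<le> b"
  using wcontr_less_iff[of I f b a] by (simp add: not_less[symmetric])

lemma wcontr_nonexp: "wcontr I f \<Longrightarrow> a \<in> I \<Longrightarrow> b \<in> I \<Longrightarrow> a \<le> b \<Longrightarrow> f b - f a \<le> b - a"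
  unfolding wcontr_def by (cases "a = b") auto

lemma contr_strict: "contr I f \<Longrightarrow> a \<in> I \<Longrightarrow> b \<in> I \<Longrightarrow> a < b \<Longrightarrow> f b - f a < b - a"
  unfolding contr_def by auto

lemma maps_funpow: "maps I f \<Longrightarrow> y \<in> I \<Longrightarrow> (f^^k) y \<in> I"
  unfolding maps_def by (induction k) auto

lemma maps_funpow': "maps I f \<Longrightarrow> maps I (f^^k)"
  using maps_funpow unfolding maps_def by blast

lemma wcontr_funpow: "maps I f \<Longrightarrow> wcontr I f \<Longrightarrow> wcontr I (f^^k)"
proof (induction k)
  case 0 then show ?case by (simp add: wcontr_def)
next
  case (Suc k)
  show ?case unfolding wcontr_def
  proof (intro ballI impI)
    fix a b assume ab: "a \<in> I" "b \<in> I" "a < b"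
    have h: "(f^^k) a < (f^^k) b" "(f^^k) b - (f^^k) a \<le> b - a"
      using Suc ab unfolding wcontr_def by auto
    have i: "(f^^k) a \<in> I" "(f^^k) b \<in> I" using Suc.prems ab maps_funpow by auto
    have "f ((f^^k) a) < f ((f^^k) b)" "f ((f^^k) b) - f ((f^^k) a) \<le> (f^^k) b - (f^^k) a"
      using Suc.prems(2) i h unfolding wcontr_def by auto
    then show "(f ^^ Suc k) a < (f ^^ Suc k) b \<and> (f ^^ Suc k) b - (f ^^ Suc k) a \<le> b - a"
      using h by simp
  qed
qed

lemma contr_comp1: "contr I g \<Longrightarrow> wcontr I h \<Longrightarrow> maps I h \<Longrightarrow> contr I (\<lambda>t. g (h t))"
  unfolding contr_def wcontr_def maps_def by (smt (verit))

lemma contr_comp2: "wcontr I g \<Longrightarrow> contr I h \<Longrightarrow> maps I h \<Longrightarrow> contr I (\<lambda>t. g (h t))"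
  unfolding contr_def wcontr_def maps_def by (smt (verit))

lemma maps_comp: "maps I g \<Longrightarrow> maps I h \<Longrightarrow> maps I (\<lambda>t. g (h t))"
  unfolding maps_def by auto

lemma wcontr_abs: "wcontr I f \<Longrightarrow> a \<in> I \<Longrightarrow> b \<in> I \<Longrightarrow> \<bar>f a - f b\<bar> \<le> \<bar>a - b\<bar>"
proof (cases "a \<le> b")
  case True
  assume w: "wcontr I f" and ab: "a \<in> I" "b \<in> I"
  have "f b - f a \<le> b - a" "f a \<le> f b" using wcontr_nonexp[OF w ab True] wcontr_le_iff[OF w ab] True by auto
  then show ?thesis using True by linarith
next
  case False
  assume w: "wcontr I f" and ab: "a \<in> I" "b \<in> I"
  have "f a - f b \<le> a - b" "f b \<le> f a" using wcontr_nonexp[OF w ab(2,1)] wcontr_le_iff[OF w ab(2,1)] False by auto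
  then show ?thesis using False by linarith
qed

lemma wcontr_cont: "wcontr I f \<Longrightarrow> continuous_on I f"
  unfolding continuous_on_iff
proof (intro ballI allI impI)
  fix x e assume w: "wcontr I f" and x: "x \<in> I" and e: "(0::real) < e"
  show "\<exists>d>0. \<forall>x'\<in>I. dist x' x < d \<longrightarrow> dist (f x') (f x) < e"
  proof (rule exI[of _ e], intro conjI ballI impI)
    show "0 < e" by (rule e)
    fix x' assume x': "x' \<in> I" "dist x' x < e"
    have "\<bar>f x' - f x\<bar> \<le> \<bar>x' - x\<bar>" by (rule wcontr_abs[OF w x'(1) x])
    then show "dist (f x') (f x) < e" using x'(2) unfolding dist_real_def by linarith
  qed
qed

lemma ivt_I:
  assumes "is_interval I" "wcontr I f" "a \<in> I" "b \<in> I" "a \<le> b" "f a \<le> y" "y \<le> f b"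
  shows "\<exists>c. a \<le> c \<and> c \<le> b \<and> c \<in> I \<and> f c = y"
proof -
  have sub: "{a..b} \<subseteq> I"
  proof
    fix z assume "z \<in> {a..b}"
    then have "a \<le> z" "z \<le> b" by auto
    then show "z \<in> I" using assms(1,3,4) unfolding is_interval_1 by blast
  qed
  have "continuous_on {a..b} f" by (rule continuous_on_subset[OF wcontr_cont[OF assms(2)] sub])
  then obtain c where c: "a \<le> c" "c \<le> b" "f c = y" using IVT'[of f a y b] assms(5-7) by blast
  have "c \<in> I" using sub c by auto
  then show ?thesis using c by blast
qed



definition perlen :: "(nat \<Rightarrow> nat) \<Rightarrow> nat \<Rightarrow> bool" where
  "perlen s k \<longleftrightarrow> 0 < k \<and> (\<forall>j. s (j + k) = s j)"

definition shortest :: "(nat \<Rightarrow> nat) \<Rightarrow> nat \<Rightarrow> bool" where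
  "shortest s n \<longleftrightarrow> perlen s n \<and> (\<forall>k. perlen s k \<longrightarrow> n \<le> k)"

fun bsum :: "(nat \<Rightarrow> nat) \<Rightarrow> nat \<Rightarrow> nat" where
  "bsum L 0 = 0"
| "bsum L (Suc i) = bsum L i + L i"

lemma bsum_mono: "\<forall>i. 1 \<le> L i \<Longrightarrow> i < j \<Longrightarrow> bsum L i < bsum L j"
proof (induction j)
  case 0 then show ?case by simp
next
  case (Suc j)
  then show ?case
  proof (cases "i = j")
    case True then show ?thesis using Suc.prems(1) by (simp add: Suc_le_eq)
  next
    case False then have "bsum L i < bsum L j" using Suc by simp
    then show ?thesis by simp
  qed
qed

lemma bsum_ge: "\<forall>i. 2 \<le> L i \<Longrightarrow> 2 * i \<le> bsum L i"
proof (induction i)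
  case 0 then show ?case by simp
next
  case (Suc i) then show ?case by (metis bsum.simps(2) add_mono mult_Suc_right add.commute)
qed

lemma locate: "\<forall>i. 1 \<le> L i \<Longrightarrow> \<exists>i r. j = bsum L i + r \<and> r < L i"
proof (induction j)
  case 0
  have "0 = bsum L 0 + 0 \<and> 0 < L 0" using 0 by (simp add: Suc_le_eq)
  then show ?case by blast
next
  case (Suc j)
  then obtain i r where ir: "j = bsum L i + r" "r < L i" by blast
  show ?case
  proof (cases "Suc r < L i")
    case True
    then have "Suc j = bsum L i + Suc r \<and> Suc r < L i" using ir by simp
    then show ?thesis by blast
  next
    case False
    then have "Suc j = bsum L (Suc i) + 0" using ir by simp
    moreover have "0 < L (Suc i)" using Suc.prems by (simp add: Suc_le_eq)
    ultimately show ?thesis by blast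
  qed
qed

lemma bsum_shift: "\<forall>i. L (i + k) = L i \<Longrightarrow> bsum L (i + k) = bsum L i + bsum L k"
proof (induction i)
  case 0 then show ?case by simp
next
  case (Suc i)
  have "bsum L (Suc i + k) = bsum L (i + k) + L (i + k)" by simp
  also have "\<dots> = bsum L i + bsum L k + L i" using Suc by simp
  finally show ?case by simp
qed

lemma block_lemma:
  fixes s s' :: "nat \<Rightarrow> nat" and blk :: "nat \<Rightarrow> nat list" and d n m :: nat
  defines "L \<equiv> (\<lambda>i. length (blk (s' i)))"
  assumes len: "\<forall>i. 2 \<le> L i"
    and H1: "\<forall>i r. r < L i \<longrightarrow> s (bsum L i + r) = blk (s' i) ! r"
    and dec: "\<forall>i. s' i = s (bsum L i + d)"
    and sh: "shortest s n"
    and bm: "bsum L m = n"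
  shows "shortest s' m \<and> m < n \<and> map s [0..<n] = concat (map blk (map s' [0..<m]))"
proof -
  have len1: "\<forall>i. 1 \<le> L i" using len by (metis le_trans one_le_numeral)
  have pn: "0 < n" "\<forall>j. s (j + n) = s j" using sh unfolding shortest_def perlen_def by auto
  have m0: "0 < m" using bm pn(1) by (cases m) auto
  have st1: "bsum L (i + m) = bsum L i + n \<and> s' (i + m) = s' i" for i
  proof (induction i)
    case 0
    have "s' m = s (bsum L m + d)" using dec by blast
    also have "\<dots> = s (d + n)" using bm by (simp add: add.commute)
    also have "\<dots> = s d" using pn by blast
    also have "\<dots> = s' 0" using dec by simp
    finally show ?case using bm by simp
  next
    case (Suc i)
    have b1: "bsum L (Suc i + m) = bsum L (Suc i) + n"
      using Suc unfolding L_def by simp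
    have "s' (Suc i + m) = s (bsum L (Suc i + m) + d)" using dec by blast
    also have "\<dots> = s ((bsum L (Suc i) + d) + n)" using b1 by (simp add: algebra_simps)
    also have "\<dots> = s (bsum L (Suc i) + d)" using pn by blast
    also have "\<dots> = s' (Suc i)" using dec by simp
    finally show ?case using b1 by simp
  qed
  have ps': "perlen s' m" unfolding perlen_def using m0 st1 by simp
  have st2: "perlen s (bsum L k)" if pk: "perlen s' k" for k
  proof -
    have k0: "0 < k" and sk: "\<forall>i. s' (i + k) = s' i" using pk unfolding perlen_def by auto
    have Lk: "\<forall>i. L (i + k) = L i" using sk unfolding L_def by simp
    have "bsum L 0 < bsum L k" using bsum_mono[OF len1 k0] .
    then have pos: "0 < bsum L k" by simp
    have "s (j + bsum L k) = s j" for j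
    proof -
      obtain i r where ir: "j = bsum L i + r" "r < L i" using locate[OF len1] by blast
      have "s (j + bsum L k) = s (bsum L (i + k) + r)" using ir bsum_shift[OF Lk] by (simp add: algebra_simps)
      also have "\<dots> = blk (s' (i + k)) ! r" using H1 ir Lk by simp
      also have "\<dots> = blk (s' i) ! r" using sk by simp
      also have "\<dots> = s j" using H1 ir by simp
      finally show ?thesis .
    qed
    then show ?thesis unfolding perlen_def using pos by simp
  qed
  have sh': "shortest s' m"
    unfolding shortest_def
  proof (intro conjI allI impI)
    show "perlen s' m" by (rule ps')
    fix k assume pk: "perlen s' k"
    show "m \<le> k"
    proof (rule ccontr)
      assume "\<not> m \<le> k"
      then have "bsum L k < bsum L m" using bsum_mono[OF len1] by simp
      moreover have "n \<le> bsum L k" using sh st2[OF pk] unfolding shortest_def by blast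
      ultimately show False using bm by simp
    qed
  qed
  have "2 * m \<le> n" using bsum_ge[OF len, of m] bm by simp
  then have mn: "m < n" using m0 by linarith
  have mp: "map s [0..<bsum L m'] = concat (map blk (map s' [0..<m']))" for m'
  proof (induction m')
    case 0 then show ?case by simp
  next
    case (Suc m')
    have e: "[0..<bsum L (Suc m')] = [0..<bsum L m'] @ [bsum L m'..<bsum L m' + L m']"
      using upt_add_eq_append[of 0 "bsum L m'" "L m'"] by simp
    have "map s [bsum L m'..<bsum L m' + L m'] = blk (s' m')"
    proof (rule nth_equalityI)
      show "length (map s [bsum L m'..<bsum L m' + L m']) = length (blk (s' m'))" by (simp add: L_def)
      fix r assume "r < length (map s [bsum L m'..<bsum L m' + L m'])"
      then have r: "r < L m'" by simp
      then have "map s [bsum L m'..<bsum L m' + L m'] ! r = s (bsum L m' + r)" by simp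
      also have "\<dots> = blk (s' m') ! r" using H1 r by blast
      finally show "map s [bsum L m'..<bsum L m' + L m'] ! r = blk (s' m') ! r" .
    qed
    then show ?case using Suc e by simp
  qed
  show ?thesis using sh' mn mp[of m] bm by simp
qed



definition lseq :: "(real \<Rightarrow> real) \<Rightarrow> (real \<Rightarrow> real) \<Rightarrow> real \<Rightarrow> nat \<Rightarrow> nat" where
  "lseq f0 f1 x j = (if x \<le> thr_orbit f0 f1 x j then 1 else 0)"

definition Hyp :: "real set \<Rightarrow> (real \<Rightarrow> real) \<Rightarrow> (real \<Rightarrow> real) \<Rightarrow> real \<Rightarrow> bool" where
  "Hyp I f0 f1 x \<longleftrightarrow> is_interval I \<and> maps I f0 \<and> maps I f1 \<and> contr I f0 \<and> contr I f1 \<and> x \<in> I"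

fun porb :: "(real \<Rightarrow> bool) \<Rightarrow> (real \<Rightarrow> real) \<Rightarrow> (real \<Rightarrow> real) \<Rightarrow> real \<Rightarrow> nat \<Rightarrow> real" where
  "porb P G0 G1 u 0 = u"
| "porb P G0 G1 u (Suc i) = (if P (porb P G0 G1 u i) then G1 (porb P G0 G1 u i) else G0 (porb P G0 G1 u i))"

lemma lseq_01: "lseq f0 f1 x j \<noteq> 1 \<Longrightarrow> lseq f0 f1 x j = 0"
  unfolding lseq_def by (simp split: if_splits)

lemma lseq_le: "lseq f0 f1 x j \<le> 1"
  unfolding lseq_def by simp

lemma orbit_in: "Hyp I f0 f1 x \<Longrightarrow> thr_orbit f0 f1 x j \<in> I"
  unfolding Hyp_def maps_def by (induction j) auto

lemma run0:
  assumes "\<forall>r'<r. lseq f0 f1 x (j + r') = 0"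
  shows "thr_orbit f0 f1 x (j + r) = (f0^^r) (thr_orbit f0 f1 x j)"
  using assms
proof (induction r)
  case 0 then show ?case by simp
next
  case (Suc r)
  have "lseq f0 f1 x (j + r) = 0" using Suc.prems by simp
  then have "\<not> x \<le> thr_orbit f0 f1 x (j + r)" unfolding lseq_def by (simp split: if_splits)
  then show ?case using Suc by simp
qed

lemma run1:
  assumes "\<forall>r'<r. lseq f0 f1 x (j + r') = 1"
  shows "thr_orbit f0 f1 x (j + r) = (f1^^r) (thr_orbit f0 f1 x j)"
  using assms
proof (induction r)
  case 0 then show ?case by simp
next
  case (Suc r)
  have "lseq f0 f1 x (j + r) = 1" using Suc.prems by simp
  then have "x \<le> thr_orbit f0 f1 x (j + r)" unfolding lseq_def by (simp split: if_splits)
  then show ?case using Suc by simp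
qed

lemma run0':
  assumes "\<forall>r'<r. (f0^^r') (thr_orbit f0 f1 x j) < x"
  shows "thr_orbit f0 f1 x (j + r) = (f0^^r) (thr_orbit f0 f1 x j) \<and> (\<forall>r'<r. lseq f0 f1 x (j + r') = 0)"
  using assms
proof (induction r)
  case 0 then show ?case by simp
next
  case (Suc r)
  then have IH: "thr_orbit f0 f1 x (j + r) = (f0^^r) (thr_orbit f0 f1 x j)"
    "\<forall>r'<r. lseq f0 f1 x (j + r') = 0" by auto
  have lt: "(f0^^r) (thr_orbit f0 f1 x j) < x" using Suc.prems by simp
  have l: "lseq f0 f1 x (j + r) = 0" using IH(1) lt unfolding lseq_def by simp
  have "\<forall>r'<Suc r. lseq f0 f1 x (j + r') = 0" using IH(2) l less_Suc_eq by auto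
  moreover have "thr_orbit f0 f1 x (j + Suc r) = (f0^^Suc r) (thr_orbit f0 f1 x j)"
    using IH(1) lt by simp
  ultimately show ?case by blast
qed

lemma run1':
  assumes "\<forall>r'<r. x \<le> (f1^^r') (thr_orbit f0 f1 x j)"
  shows "thr_orbit f0 f1 x (j + r) = (f1^^r) (thr_orbit f0 f1 x j) \<and> (\<forall>r'<r. lseq f0 f1 x (j + r') = 1)"
  using assms
proof (induction r)
  case 0 then show ?case by simp
next
  case (Suc r)
  then have IH: "thr_orbit f0 f1 x (j + r) = (f1^^r) (thr_orbit f0 f1 x j)"
    "\<forall>r'<r. lseq f0 f1 x (j + r') = 1" by auto
  have lt: "x \<le> (f1^^r) (thr_orbit f0 f1 x j)" using Suc.prems by simp
  have l: "lseq f0 f1 x (j + r) = 1" using IH(1) lt unfolding lseq_def by simp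
  have "\<forall>r'<Suc r. lseq f0 f1 x (j + r') = 1" using IH(2) l less_Suc_eq by auto
  moreover have "thr_orbit f0 f1 x (j + Suc r) = (f1^^Suc r) (thr_orbit f0 f1 x j)"
    using IH(1) lt by simp
  ultimately show ?case by blast
qed

lemma thr_porb: "thr_orbit f0 f1 x i = porb (\<lambda>t. x \<le> t) f0 f1 (f1 x) i"
  by (induction i) auto

lemma porb_cong:
  assumes "\<forall>i. P (porb P G0 G1 u i) = Q (porb P G0 G1 u i)"
  shows "porb P G0 G1 u i = porb Q G0 G1 u i"
proof (induction i)
  case 0 then show ?case by simp
next
  case (Suc i)
  have "P (porb P G0 G1 u i) = Q (porb Q G0 G1 u i)" using assms Suc by metis
  then show ?case using Suc by simp
qed

lemma shortest_pos: "shortest s n \<Longrightarrow> 0 < n"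
  unfolding shortest_def perlen_def by auto

lemma shortest_per: "shortest s n \<Longrightarrow> s (j + n) = s j"
  unfolding shortest_def perlen_def by auto



lemma caseB:
  fixes I :: "real set" and f0 f1 :: "real \<Rightarrow> real" and x :: real and n :: nat
  assumes IH: "\<forall>n'<n. \<forall>g0 g1 c. Hyp I g0 g1 c \<longrightarrow> shortest (lseq g0 g1 c) n' \<longrightarrow> valid_word (map (lseq g0 g1 c) [0..<n'])"
    and H: "Hyp I f0 f1 x" and sh: "shortest (lseq f0 f1 x) n"
    and ux: "f1 x < x" and xv: "x < f0 x" and caseB: "x < f1 (f0 x)"
  shows "valid_word (map (lseq f0 f1 x) [0..<n])"
proof -
  define s where "s = lseq f0 f1 x"
  define orb where "orb = thr_orbit f0 f1 x"
  define u where "u = f1 x"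
  define v where "v = f0 x"
  have I: "is_interval I" and m0: "maps I f0" and m1: "maps I f1" and c0: "contr I f0" and c1: "contr I f1"
    and xI: "x \<in> I" using H unfolding Hyp_def by auto
  have w0: "wcontr I f0" and w1: "wcontr I f1" using c0 c1 contr_wcontr by auto
  have uI: "u \<in> I" and vI: "v \<in> I" using m0 m1 xI unfolding maps_def u_def v_def by auto
  have orbI: "\<And>j. orb j \<in> I" using orbit_in[OF H] unfolding orb_def by blast
  have ux': "u < x" and xv': "x < v" using ux xv unfolding u_def v_def by auto
  have g1: "f0 x - f0 u < x - u" using contr_strict[OF c0 uI xI ux'] .
  have g2: "f1 v - f1 x < v - x" using contr_strict[OF c1 xI vI xv'] .
  have f0u: "x < f0 u" using g1 g2 caseB unfolding u_def v_def by linarith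
  define y where "y = f0 u"
  have yI: "y \<in> I" using m0 uI unfolding maps_def y_def by auto
  have orb0: "orb 0 = u" unfolding orb_def u_def by simp
  have orb1: "orb 1 = y" using ux' unfolding orb_def y_def u_def by simp
  have s0: "s 0 = 0" using ux' unfolding s_def lseq_def u_def by simp
  have n0: "0 < n" using shortest_pos[OF sh] .
  have sn: "s n = 0" using shortest_per[OF sh, of 0] s0 unfolding s_def by simp
  have s01: "\<And>j. s j \<noteq> 0 \<Longrightarrow> s j = 1" unfolding s_def lseq_def by (simp split: if_splits)
  have exq: "\<exists>k. (f1^^k) y < x"
  proof -
    have ex: "\<exists>j. s (1 + j) = 0" using sn n0 by (intro exI[of _ "n - 1"]) simp
    define j0 where "j0 = (LEAST j. s (1 + j) = 0)"
    have j0: "s (1 + j0) = 0" using LeastI_ex[OF ex] unfolding j0_def .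
    have "\<forall>r'<j0. s (1 + r') = 1" using not_less_Least[of _ "\<lambda>j. s (1 + j) = 0"] s01 unfolding j0_def by blast
    then have "orb (1 + j0) = (f1^^j0) (orb 1)" using run1[of j0 f0 f1 x 1] unfolding s_def orb_def by blast
    moreover have "orb (1 + j0) < x" using j0 unfolding s_def lseq_def orb_def by (simp split: if_splits)
    ultimately show ?thesis using orb1 by auto
  qed
  define q where "q = (LEAST k. (f1^^k) y < x)"
  have hq: "(f1^^q) y < x" using LeastI_ex[OF exq] unfolding q_def .
  have hq': "\<And>k. k < q \<Longrightarrow> x \<le> (f1^^k) y" using not_less_Least[of _ "\<lambda>k. (f1^^k) y < x"] unfolding q_def by force
  have q1: "1 \<le> q"
  proof (rule ccontr)
    assume "\<not> 1 \<le> q" then have "q = 0" by simp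
    then show False using hq f0u unfolding y_def by simp
  qed
  define F where "F = (\<lambda>t. (f1^^q) (f0 t))"
  define P where "P = (\<lambda>t. x \<le> F t)"
  define G0 where "G0 = F"
  define G1 where "G1 = (\<lambda>t. (f1^^Suc q) (f0 t))"
  define blk where "blk = (\<lambda>a::nat. if a = 0 then 0 # replicate q (1::nat) else 0 # replicate (q + 1) 1)"
  define sl where "sl = (\<lambda>t. if P t then 1 else (0::nat))"
  have wq: "wcontr I (f1^^q)" using wcontr_funpow[OF m1 w1] .
  have mq: "maps I (f1^^q)" using maps_funpow'[OF m1] .
  have blockB: "(\<forall>r < length (blk (sl t)). s (j + r) = blk (sl t) ! r)
      \<and> orb (j + length (blk (sl t))) = (if P t then G1 t else G0 t)
      \<and> (if P t then G1 t else G0 t) \<in> I \<and> u \<le> (if P t then G1 t else G0 t)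
      \<and> (if P t then G1 t else G0 t) < x"
    if tj: "orb j = t" and tu: "u \<le> t" and tx: "t < x" for j t
  proof -
    have tI: "t \<in> I" using orbI tj by blast
    have sj: "s j = 0" using tj tx unfolding s_def lseq_def orb_def by simp
    define y' where "y' = f0 t"
    have y'I: "y' \<in> I" using m0 tI unfolding maps_def y'_def by auto
    have oSj: "orb (Suc j) = y'" using tj tx unfolding orb_def y'_def by simp
    have yy: "y \<le> y'" using wcontr_le_iff[OF w0 uI tI] tu unfolding y_def y'_def by simp
    have ones: "\<And>r. r < q \<Longrightarrow> x \<le> (f1^^r) y'"
    proof -
      fix r assume "r < q"
      have "(f1^^r) y \<le> (f1^^r) y'" using wcontr_le_iff[OF wcontr_funpow[OF m1 w1] yI y'I] yy by simp
      then show "x \<le> (f1^^r) y'" using hq'[OF \<open>r < q\<close>] by linarith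
    qed
    have zI: "(f1^^q) y' \<in> I" using maps_funpow[OF m1 y'I] .
    show ?thesis
    proof (cases "P t")
      case True
      have Pz: "x \<le> (f1^^q) y'" using True unfolding P_def F_def y'_def by simp
      have all: "\<forall>r'<Suc q. x \<le> (f1^^r') (orb (Suc j))" using ones Pz oSj less_Suc_eq by auto
      have R: "orb (Suc j + Suc q) = (f1^^Suc q) y'" "\<forall>r'<Suc q. s (Suc j + r') = 1"
        using run1'[OF all[unfolded orb_def]] oSj unfolding orb_def s_def by auto
      have bl: "blk (sl t) = 0 # replicate (Suc q) 1" using True unfolding blk_def sl_def by simp
      have letters: "\<forall>r < length (blk (sl t)). s (j + r) = blk (sl t) ! r"
      proof (intro allI impI)
        fix r assume "r < length (blk (sl t))"
        then have r: "r < Suc (Suc q)" using bl by simp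
        show "s (j + r) = blk (sl t) ! r"
        proof (cases r)
          case 0 then show ?thesis using sj bl by simp
        next
          case (Suc r')
          then have "r' < Suc q" using r by simp
          then show ?thesis using R(2) Suc bl by (simp del: replicate_Suc)
        qed
      qed
      have o2: "orb (j + length (blk (sl t))) = G1 t"
        using R(1) bl unfolding G1_def y'_def by simp
      define z where "z = (f1^^q) y'"
      have G1z: "G1 t = f1 z" unfolding G1_def z_def y'_def by simp
      have ne1: "(f1^^q) y' - (f1^^q) y \<le> y' - y" using wcontr_nonexp[OF wq yI y'I yy] .
      have ne2: "f0 t - f0 u \<le> t - u" using wcontr_nonexp[OF w0 uI tI tu] .
      have ne3: "f1 z - f1 x \<le> z - x" using wcontr_nonexp[OF w1 xI zI[folded z_def]] Pz unfolding z_def by simp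
      have G1I: "G1 t \<in> I" using m1 zI unfolding maps_def G1z z_def by auto
      have G1u: "u \<le> G1 t" using wcontr_le_iff[OF w1 xI zI] Pz unfolding G1z z_def u_def by simp
      have G1x: "G1 t < x" using ne1 ne2 ne3 hq tx unfolding G1z z_def y'_def y_def u_def by linarith
      show ?thesis using letters o2 G1I G1u G1x True by simp
    next
      case False
      have all: "\<forall>r'<q. x \<le> (f1^^r') (orb (Suc j))" using ones oSj by auto
      have R: "orb (Suc j + q) = (f1^^q) y'" "\<forall>r'<q. s (Suc j + r') = 1"
        using run1'[OF all[unfolded orb_def]] oSj unfolding orb_def s_def by auto
      have bl: "blk (sl t) = 0 # replicate q 1" using False unfolding blk_def sl_def by simp
      have letters: "\<forall>r < length (blk (sl t)). s (j + r) = blk (sl t) ! r"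
      proof (intro allI impI)
        fix r assume "r < length (blk (sl t))"
        then have r: "r < Suc q" using bl by simp
        show "s (j + r) = blk (sl t) ! r"
        proof (cases r)
          case 0 then show ?thesis using sj bl by simp
        next
          case (Suc r')
          then have "r' < q" using r by simp
          then show ?thesis using R(2) Suc bl by (simp del: replicate_Suc)
        qed
      qed
      have o2: "orb (j + length (blk (sl t))) = G0 t"
        using R(1) bl unfolding G0_def F_def y'_def by simp
      have G0x: "G0 t < x" using False unfolding P_def G0_def by simp
      have G0I: "G0 t \<in> I" using zI unfolding G0_def F_def y'_def by simp
      obtain q' where qq: "q = Suc q'" using q1 by (cases q) auto
      have xz: "x \<le> (f1^^q') y'" using ones qq by simp
      have zI': "(f1^^q') y' \<in> I" using maps_funpow[OF m1 y'I] .
      have "f1 x \<le> f1 ((f1^^q') y')" using wcontr_le_iff[OF w1 xI zI'] xz by simp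
      then have G0u: "u \<le> G0 t" unfolding G0_def F_def u_def y'_def qq by simp
      show ?thesis using letters o2 G0I G0u G0x False by simp
    qed
  qed
  define g where "g = porb P G0 G1 u"
  define s' where "s' = (\<lambda>i. sl (g i))"
  define L where "L = (\<lambda>i. length (blk (s' i)))"
  have gS: "\<And>i. g (Suc i) = (if P (g i) then G1 (g i) else G0 (g i))" unfolding g_def by simp
  have inv: "g i \<in> I \<and> u \<le> g i \<and> g i < x \<and> orb (bsum L i) = g i" for i
  proof (induction i)
    case 0 show ?case using uI ux' orb0 unfolding g_def by simp
  next
    case (Suc i)
    then have a: "orb (bsum L i) = g i" "u \<le> g i" "g i < x" by auto
    have "bsum L (Suc i) = bsum L i + length (blk (sl (g i)))" unfolding L_def s'_def by simp
    then show ?case using blockB[OF a] gS[of i] by simp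
  qed
  have H1: "\<forall>i r. r < L i \<longrightarrow> s (bsum L i + r) = blk (s' i) ! r"
  proof (intro allI impI)
    fix i r assume "r < L i"
    then show "s (bsum L i + r) = blk (s' i) ! r" using inv[of i] blockB[of "bsum L i" "g i"] unfolding L_def s'_def by auto
  qed
  have lenL: "\<forall>i. 2 \<le> L i" using q1 unfolding L_def blk_def by simp
  have dec: "\<forall>i. s' i = s (bsum L i + (q + 1))"
  proof
    fix i
    show "s' i = s (bsum L i + (q + 1))"
    proof (cases "s' i = 0")
      case True
      have "bsum L (Suc i) = bsum L i + (q + 1)" using True unfolding L_def blk_def by simp
      moreover have "s (bsum L (Suc i) + 0) = blk (s' (Suc i)) ! 0" using H1 lenL by (metis not_gr_zero not_numeral_le_zero)
      ultimately show ?thesis using True unfolding blk_def by (simp split: if_splits)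
    next
      case False
      then have s1: "s' i = 1" unfolding s'_def sl_def by (simp split: if_splits)
      have "q + 1 < L i" using s1 unfolding L_def blk_def by simp
      then have "s (bsum L i + (q + 1)) = blk (s' i) ! (q + 1)" using H1 by blast
      also have "\<dots> = 1" using s1 unfolding blk_def by (simp del: replicate_Suc)
      finally show ?thesis using s1 by simp
    qed
  qed
  have nb: "\<exists>m. bsum L m = n"
  proof -
    obtain i r where ir: "n = bsum L i + r" "r < L i" using locate[of L n] lenL by (metis le_trans one_le_numeral)
    have "r = 0"
    proof (rule ccontr)
      assume r0: "r \<noteq> 0"
      then obtain r' where rr: "r = Suc r'" by (cases r) auto
      have "s n = blk (s' i) ! r" using H1 ir by blast
      also have "\<dots> = 1" using rr ir(2) unfolding L_def blk_def by (auto simp del: replicate_Suc)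
      finally show False using sn by simp
    qed
    then show ?thesis using ir by auto
  qed
  then obtain m where bm: "bsum L m = n" by blast
  have BL: "shortest s' m \<and> m < n \<and> map s [0..<n] = concat (map blk (map s' [0..<m]))"
    using block_lemma[of blk s' s "q + 1" n m] lenL H1 dec sh bm unfolding L_def s_def by blast
  have mor: "concat (map blk w) = morphR q w" for w unfolding morphR_def blk_def by simp
  have mpos: "0 < m" using shortest_pos BL by blast
  have w_eq: "map s [0..<n] = morphR q (map s' [0..<m])" using BL mor[of "map s' [0..<m]"] by (simp del: map_map)
  show ?thesis
  proof (cases "\<exists>i0. P (g i0)")
    case False
    then have z: "\<forall>i. s' i = 0" unfolding s'_def sl_def by simp
    have "perlen s' 1" unfolding perlen_def using z by simp
    then have "m \<le> 1" using BL unfolding shortest_def by blast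
    then have m1: "m = 1" using mpos by simp
    have "map s [0..<n] = morphR q [0]" using w_eq m1 z by simp
    then show ?thesis using valid_R[OF valid_zero q1] unfolding s_def by simp
  next
    case True
    then obtain i0 where Pi0: "P (g i0)" by blast
    have wF: "wcontr I F" unfolding F_def using contr_wcontr[OF contr_comp2[OF wq c0 m0]] .
    have cF: "contr I F" unfolding F_def using contr_comp2[OF wq c0 m0] .
    have mF: "maps I F" unfolding F_def using maps_comp[OF mq m0] .
    have gI: "g i0 \<in> I" "u \<le> g i0" using inv by auto
    have Fu: "F u \<le> x" using hq unfolding F_def y_def by simp
    have Fg: "x \<le> F (g i0)" using Pi0 unfolding P_def .
    obtain c where c: "u \<le> c" "c \<le> g i0" "c \<in> I" "F c = x" using ivt_I[OF I wF uI gI(1) gI(2) Fu Fg] by blast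
    have cG1: "contr I G1" unfolding G1_def using contr_comp2[OF wcontr_funpow[OF m1 w1] c0 m0] .
    have mG1: "maps I G1" unfolding G1_def using maps_comp[OF maps_funpow'[OF m1] m0] .
    have HG: "Hyp I G0 G1 c" unfolding Hyp_def G0_def using I mF cF cG1 mG1 c(3) by simp
    have G1c: "G1 c = u" using c(4) unfolding G1_def F_def u_def by simp
    have Pc: "\<forall>i. P (g i) = (c \<le> g i)"
    proof
      fix i
      have "g i \<in> I" using inv by auto
      then show "P (g i) = (c \<le> g i)" using wcontr_le_iff[OF wF c(3)] c(4) unfolding P_def by simp
    qed
    have orbG: "thr_orbit G0 G1 c i = g i" for i
    proof -
      have "thr_orbit G0 G1 c i = porb (\<lambda>t. c \<le> t) G0 G1 u i" using thr_porb[of G0 G1 c i] G1c by simp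
      also have "\<dots> = g i" unfolding g_def using porb_cong[of P G0 G1 u "\<lambda>t. c \<le> t" i] Pc unfolding g_def by simp
      finally show ?thesis .
    qed
    have sG: "lseq G0 G1 c = s'"
    proof
      fix i show "lseq G0 G1 c i = s' i" unfolding lseq_def s'_def sl_def using orbG Pc by simp
    qed
    have "valid_word (map s' [0..<m])" using IH BL HG sG by metis
    then show ?thesis using valid_R[OF _ q1] w_eq unfolding s_def by simp
  qed
qed



lemma stay0:
  assumes "maps I f0" "wcontr I f0" "x \<in> I" "x < f0 x" "z \<in> I" "x \<le> z"
  shows "x \<le> (f0^^k) z"
proof (induction k)
  case 0 then show ?case using assms by simp
next
  case (Suc k)
  have zI: "(f0^^k) z \<in> I" using maps_funpow[OF assms(1,5)] .
  have "f0 x \<le> f0 ((f0^^k) z)" using wcontr_le_iff[OF assms(2,3) zI] Suc by simp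
  then show ?case using assms(4) by simp
qed

lemma caseA:
  fixes I :: "real set" and f0 f1 :: "real \<Rightarrow> real" and x :: real and n :: nat
  assumes IH: "\<forall>n'<n. \<forall>g0 g1 c. Hyp I g0 g1 c \<longrightarrow> shortest (lseq g0 g1 c) n' \<longrightarrow> valid_word (map (lseq g0 g1 c) [0..<n'])"
    and H: "Hyp I f0 f1 x" and sh: "shortest (lseq f0 f1 x) n"
    and ux: "f1 x < x" and xv: "x < f0 x" and caseA: "f1 (f0 x) \<le> x"
    and ex1: "\<exists>j. lseq f0 f1 x j = 1"
  shows "valid_word (map (lseq f0 f1 x) [0..<n])"
proof -
  define s where "s = lseq f0 f1 x"
  define orb where "orb = thr_orbit f0 f1 x"
  define u where "u = f1 x"
  define v where "v = f0 x"
  have I: "is_interval I" and m0: "maps I f0" and m1: "maps I f1" and c0: "contr I f0" and c1: "contr I f1"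
    and xI: "x \<in> I" using H unfolding Hyp_def by auto
  have w0: "wcontr I f0" and w1: "wcontr I f1" using c0 c1 contr_wcontr by auto
  have uI: "u \<in> I" and vI: "v \<in> I" using m0 m1 xI unfolding maps_def u_def v_def by auto
  have orbI: "\<And>j. orb j \<in> I" using orbit_in[OF H] unfolding orb_def by blast
  have ux': "u < x" and xv': "x < v" using ux xv unfolding u_def v_def by auto
  have f1v: "f1 v \<le> x" using caseA unfolding v_def .
  have orb0: "orb 0 = u" unfolding orb_def u_def by simp
  have n0: "0 < n" using shortest_pos[OF sh] .
  have s01: "\<And>j. s j \<noteq> 1 \<Longrightarrow> s j = 0" unfolding s_def lseq_def by (simp split: if_splits)
  have exq: "\<exists>k. x \<le> (f0^^k) u"
  proof -
    have ex: "\<exists>j. s j = 1" using ex1 unfolding s_def .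
    define j0 where "j0 = (LEAST j. s j = 1)"
    have j0: "s j0 = 1" using LeastI_ex[OF ex] unfolding j0_def .
    have "\<forall>r'<j0. s (0 + r') = 0"
    proof (intro allI impI)
      fix r' assume "r' < j0"
      then have "s r' \<noteq> 1" using not_less_Least[of r' "\<lambda>j. s j = 1"] unfolding j0_def by blast
      then show "s (0 + r') = 0" using s01 by simp
    qed
    then have "orb (0 + j0) = (f0^^j0) (orb 0)" using run0[of j0 f0 f1 x 0] unfolding s_def orb_def by blast
    moreover have "x \<le> orb j0" using j0 unfolding s_def lseq_def orb_def by (simp split: if_splits)
    ultimately show ?thesis using orb0 by auto
  qed
  define q where "q = (LEAST k. x \<le> (f0^^k) u)"
  have hq: "x \<le> (f0^^q) u" using LeastI_ex[OF exq] unfolding q_def .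
  have hq': "\<And>k. k < q \<Longrightarrow> (f0^^k) u < x" using not_less_Least[of _ "\<lambda>k. x \<le> (f0^^k) u"] unfolding q_def by force
  have q1: "1 \<le> q"
  proof (rule ccontr)
    assume "\<not> 1 \<le> q" then have "q = 0" by simp
    then show False using hq ux' by simp
  qed
  define p where "p = q - 1"
  have qp: "q = p + 1" using q1 unfolding p_def by simp
  define F where "F = f0^^p"
  define P where "P = (\<lambda>t. x \<le> F t)"
  define G1 where "G1 = (\<lambda>t. f1 (F t))"
  define G0 where "G0 = (\<lambda>t. f1 ((f0^^(p+1)) t))"
  define blk where "blk = (\<lambda>a::nat. if a = 0 then replicate (p + 1) (0::nat) @ [1] else replicate p 0 @ [1])"
  define sl where "sl = (\<lambda>t. if P t then 1 else (0::nat))"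
  have wF: "wcontr I F" unfolding F_def using wcontr_funpow[OF m0 w0] .
  have mF: "maps I F" unfolding F_def using maps_funpow'[OF m0] .
  have wq: "wcontr I (f0^^(p+1))" using wcontr_funpow[OF m0 w0] .
  have Fu: "F u < x" unfolding F_def using hq'[of p] qp by simp
  have newpt: "f1 z \<in> I \<and> u \<le> f1 z \<and> f1 z - u < v - x \<and> f1 z < x"
    if z: "z \<in> I" "x \<le> z" "z < v" for z
  proof -
    have a: "f1 z \<in> I" using m1 z unfolding maps_def by auto
    have b: "u \<le> f1 z" using wcontr_le_iff[OF w1 xI z(1)] z unfolding u_def by simp
    have c: "f1 z - u \<le> z - x" using wcontr_nonexp[OF w1 xI z(1) z(2)] unfolding u_def .
    have d: "f1 z < f1 v" using wcontr_less_iff[OF w1 z(1) vI] z by simp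
    show ?thesis using a b c d z f1v by linarith
  qed
  have blockA: "(\<forall>r < length (blk (sl t)). s (j + r) = blk (sl t) ! r)
      \<and> orb (j + length (blk (sl t))) = (if P t then G1 t else G0 t)
      \<and> (if P t then G1 t else G0 t) \<in> I \<and> u \<le> (if P t then G1 t else G0 t)
      \<and> (if P t then G1 t else G0 t) - u < v - x \<and> (if P t then G1 t else G0 t) < x"
    if tj: "orb j = t" and tu: "u \<le> t" and tuv: "t - u < v - x" and tx: "t < x" for j t
  proof -
    have tI: "t \<in> I" using orbI tj by blast
    have ge: "x \<le> (f0^^(p+1)) t" using hq wcontr_le_iff[OF wq uI tI] tu qp by simp
    have Fv: "F t < v" using wcontr_nonexp[OF wF uI tI tu] Fu tuv by linarith
    have FtI: "F t \<in> I" using mF tI unfolding maps_def by auto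
    have zeros: "\<forall>r<p. (f0^^r) t < x"
    proof (intro allI impI)
      fix r assume rp: "r < p"
      show "(f0^^r) t < x"
      proof (rule ccontr)
        assume "\<not> (f0^^r) t < x"
        then have xr: "x \<le> (f0^^r) t" by simp
        have rI: "(f0^^r) t \<in> I" using maps_funpow[OF m0 tI] .
        have "x \<le> (f0^^(p - 1 - r)) ((f0^^r) t)" using stay0[OF m0 w0 xI xv rI xr] .
        also have "(f0^^(p - 1 - r)) ((f0^^r) t) = (f0^^(p - 1)) t"
          using rp funpow_add[of "p - 1 - r" r f0] by (simp add: comp_def)
        finally have xp: "x \<le> (f0^^(p - 1)) t" .
        have pI: "(f0^^(p - 1)) t \<in> I" using maps_funpow[OF m0 tI] .
        have "f0 x \<le> f0 ((f0^^(p - 1)) t)" using wcontr_le_iff[OF w0 xI pI] xp by simp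
        also have "f0 ((f0^^(p - 1)) t) = F t" using rp unfolding F_def by (cases p) auto
        finally show False using Fv unfolding v_def by simp
      qed
    qed
    show ?thesis
    proof (cases "P t")
      case True
      have R: "orb (j + p) = F t" "\<forall>r'<p. s (j + r') = 0"
        using run0'[of p f0 f1 x j] zeros tj unfolding orb_def s_def F_def by auto
      have sp: "s (j + p) = 1" using R(1) True unfolding s_def lseq_def orb_def P_def by simp
      have o2: "orb (j + (p + 1)) = G1 t" using R(1) True unfolding orb_def G1_def P_def by simp
      have bl: "blk (sl t) = replicate p 0 @ [1]" using True unfolding blk_def sl_def by simp
      have letters: "\<forall>r < length (blk (sl t)). s (j + r) = blk (sl t) ! r"
      proof (intro allI impI)
        fix r assume "r < length (blk (sl t))"
        then have r: "r < p + 1" using bl by simp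
        show "s (j + r) = blk (sl t) ! r"
        proof (cases "r < p")
          case True then show ?thesis using R(2) bl by (simp add: nth_append)
        next
          case False then have "r = p" using r by simp
          then show ?thesis using sp bl by (simp add: nth_append)
        qed
      qed
      have np: "G1 t \<in> I \<and> u \<le> G1 t \<and> G1 t - u < v - x \<and> G1 t < x"
        using newpt[OF FtI _ Fv] True unfolding G1_def P_def by simp
      show ?thesis using letters o2 np True bl by simp
    next
      case False
      have zeros': "\<forall>r'<p+1. (f0^^r') t < x" using zeros False unfolding P_def F_def using less_Suc_eq by auto
      have R: "orb (j + (p + 1)) = (f0^^(p+1)) t" "\<forall>r'<p+1. s (j + r') = 0"
        using run0'[of "p+1" f0 f1 x j] zeros' tj unfolding orb_def s_def by auto
      have sp: "s (j + (p + 1)) = 1" using R(1) ge unfolding s_def lseq_def orb_def by simp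
      have o2: "orb (j + (p + 2)) = G0 t"
      proof -
        have "orb (Suc (j + (p + 1))) = G0 t" using R(1) ge unfolding orb_def G0_def by simp
        then show ?thesis by (simp add: add.assoc)
      qed
      have bl: "blk (sl t) = replicate (p + 1) 0 @ [1]" using False unfolding blk_def sl_def by simp
      have letters: "\<forall>r < length (blk (sl t)). s (j + r) = blk (sl t) ! r"
      proof (intro allI impI)
        fix r assume "r < length (blk (sl t))"
        then have r: "r < p + 2" using bl by simp
        show "s (j + r) = blk (sl t) ! r"
        proof (cases "r < p + 1")
          case True then show ?thesis using R(2) bl by (simp add: nth_append del: replicate_Suc)
        next
          case False then have "r = p + 1" using r by simp
          then show ?thesis using sp bl by (simp add: nth_append del: replicate_Suc)
        qed
      qed
      have zI: "(f0^^(p+1)) t \<in> I" using maps_funpow[OF m0 tI] .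
      have Fx: "F t < x" using False unfolding P_def by simp
      have zv: "(f0^^(p+1)) t < v"
      proof -
        have "f0 (F t) < f0 x" using wcontr_less_iff[OF w0 FtI xI] Fx by simp
        then show ?thesis unfolding F_def v_def by simp
      qed
      have np: "G0 t \<in> I \<and> u \<le> G0 t \<and> G0 t - u < v - x \<and> G0 t < x"
        using newpt[OF zI ge zv] unfolding G0_def by simp
      have "length (blk (sl t)) = p + 2" using bl by simp
      then show ?thesis using letters o2 np False by simp
    qed
  qed
  define g where "g = porb P G0 G1 u"
  define s' where "s' = (\<lambda>i. sl (g i))"
  define L where "L = (\<lambda>i. length (blk (s' i)))"
  have gS: "\<And>i. g (Suc i) = (if P (g i) then G1 (g i) else G0 (g i))" unfolding g_def by simp
  have inv: "g i \<in> I \<and> u \<le> g i \<and> g i - u < v - x \<and> g i < x \<and> orb (bsum L i) = g i" for i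
  proof (induction i)
    case 0 show ?case using uI ux' xv' orb0 unfolding g_def by simp
  next
    case (Suc i)
    then have a: "orb (bsum L i) = g i" "u \<le> g i" "g i - u < v - x" "g i < x" by auto
    have "bsum L (Suc i) = bsum L i + length (blk (sl (g i)))" unfolding L_def s'_def by simp
    then show ?case using blockA[OF a] gS[of i] by simp
  qed
  have H1: "\<forall>i r. r < L i \<longrightarrow> s (bsum L i + r) = blk (s' i) ! r"
  proof (intro allI impI)
    fix i r assume "r < L i"
    then show "s (bsum L i + r) = blk (s' i) ! r" using inv[of i] blockA[of "bsum L i" "g i"] unfolding L_def s'_def by auto
  qed
  have P1: "1 \<le> p" if "P (g i)" for i
  proof (rule ccontr)
    assume "\<not> 1 \<le> p" then have "p = 0" by simp
    then show False using that inv[of i] unfolding P_def F_def by simp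
  qed
  have lenL: "\<forall>i. 2 \<le> L i"
  proof
    fix i show "2 \<le> L i"
    proof (cases "P (g i)")
      case True then show ?thesis using P1[OF True] unfolding L_def s'_def sl_def blk_def by simp
    next
      case False then show ?thesis unfolding L_def s'_def sl_def blk_def by simp
    qed
  qed
  have dec: "\<forall>i. s' i = s (bsum L i + p)"
  proof
    fix i
    have pL: "p < L i" unfolding L_def blk_def by simp
    have "s (bsum L i + p) = blk (s' i) ! p" using H1 pL by blast
    also have "\<dots> = s' i" unfolding blk_def s'_def sl_def by (simp add: nth_append del: replicate_Suc)
    finally show "s' i = s (bsum L i + p)" by simp
  qed
  have s'0: "s' 0 = 0" using Fu unfolding s'_def sl_def g_def P_def by simp
  have nb: "\<exists>m. bsum L m = n"
  proof -
    obtain i r where ir: "n = bsum L i + r" "r < L i" using locate[of L n] lenL by (metis le_trans one_le_numeral)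
    have "r = 0"
    proof (rule ccontr)
      assume r0: "r \<noteq> 0"
      define t' where "t' = L i - 1 - r"
      have Lle: "L i \<le> p + 2" unfolding L_def blk_def by simp
      have t'p: "t' < p + 1" using r0 ir(2) Lle unfolding t'_def by simp
      have "s (n + t') = s t'" using shortest_per[OF sh, of t'] unfolding s_def by (simp add: add.commute)
      also have "s t' = s (bsum L 0 + t')" by simp
      also have "\<dots> = blk (s' 0) ! t'"
      proof -
        have "t' < L 0" using t'p s'0 unfolding L_def blk_def by simp
        then show ?thesis using H1 by blast
      qed
      also have "\<dots> = 0" using s'0 t'p unfolding blk_def by (simp add: nth_append del: replicate_Suc)
      finally have z: "s (n + t') = 0" .
      have nt: "n + t' = bsum L i + (L i - 1)" using ir r0 unfolding t'_def by simp
      have "L i - 1 < L i" using ir(2) by simp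
      then have "s (bsum L i + (L i - 1)) = blk (s' i) ! (L i - 1)" using H1 by blast
      also have "\<dots> = 1" unfolding L_def blk_def by (simp add: nth_append del: replicate_Suc)
      finally show False using z nt by simp
    qed
    then show ?thesis using ir by auto
  qed
  then obtain m where bm: "bsum L m = n" by blast
  have BL: "shortest s' m \<and> m < n \<and> map s [0..<n] = concat (map blk (map s' [0..<m]))"
    using block_lemma[of blk s' s p n m] lenL H1 dec sh bm unfolding L_def s_def by blast
  have mor: "concat (map blk w) = morphL p w" for w unfolding morphL_def blk_def by simp
  have mpos: "0 < m" using shortest_pos BL by blast
  have w_eq: "map s [0..<n] = morphL p (map s' [0..<m])" using BL mor[of "map s' [0..<m]"] by (simp del: map_map)
  show ?thesis
  proof (cases "\<exists>i0. P (g i0)")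
    case False
    then have z: "\<forall>i. s' i = 0" unfolding s'_def sl_def by simp
    have "perlen s' 1" unfolding perlen_def using z by simp
    then have "m \<le> 1" using BL unfolding shortest_def by blast
    then have m1: "m = 1" using mpos by simp
    have "map s [0..<n] = morphL p [0]" using w_eq m1 z by simp
    also have "\<dots> = morphL (p + 1) [1]" unfolding morphL_def by simp
    finally show ?thesis using valid_L[OF valid_one, of "p + 1"] unfolding s_def by simp
  next
    case True
    then obtain i0 where Pi0: "P (g i0)" by blast
    have p1: "1 \<le> p" using P1[OF Pi0] .
    have gI: "g i0 \<in> I" "u \<le> g i0" using inv by auto
    have Fg: "x \<le> F (g i0)" using Pi0 unfolding P_def .
    obtain c where c: "u \<le> c" "c \<le> g i0" "c \<in> I" "F c = x" using ivt_I[OF I wF uI gI(1) gI(2) less_imp_le[OF Fu] Fg] by blast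
    have cG1: "contr I G1" unfolding G1_def using contr_comp1[OF c1 wF mF] .
    have mG1: "maps I G1" unfolding G1_def using maps_comp[OF m1 mF] .
    have cG0: "contr I G0" unfolding G0_def using contr_comp1[OF c1 wq maps_funpow'[OF m0]] .
    have mG0: "maps I G0" unfolding G0_def using maps_comp[OF m1 maps_funpow'[OF m0]] .
    have HG: "Hyp I G0 G1 c" unfolding Hyp_def using I cG0 mG0 cG1 mG1 c(3) by simp
    have G1c: "G1 c = u" using c(4) unfolding G1_def u_def by simp
    have Pc: "\<forall>i. P (g i) = (c \<le> g i)"
    proof
      fix i
      have "g i \<in> I" using inv by auto
      then show "P (g i) = (c \<le> g i)" using wcontr_le_iff[OF wF c(3)] c(4) unfolding P_def by simp
    qed
    have orbG: "thr_orbit G0 G1 c i = g i" for i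
    proof -
      have "thr_orbit G0 G1 c i = porb (\<lambda>t. c \<le> t) G0 G1 u i" using thr_porb[of G0 G1 c i] G1c by simp
      also have "\<dots> = g i" unfolding g_def using porb_cong[of P G0 G1 u "\<lambda>t. c \<le> t" i] Pc unfolding g_def by simp
      finally show ?thesis .
    qed
    have sG: "lseq G0 G1 c = s'"
    proof
      fix i show "lseq G0 G1 c i = s' i" unfolding lseq_def s'_def sl_def using orbG Pc by simp
    qed
    have "valid_word (map s' [0..<m])" using IH BL HG sG by metis
    then show ?thesis using valid_L[OF _ p1] w_eq unfolding s_def by simp
  qed
qed



lemma per_mod: assumes "perlen s k" shows "s j = s (j mod k)"
proof -
  have a: "s (r + m * k) = s r" for r m
  proof (induction m)
    case 0 then show ?case by simp
  next
    case (Suc m)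
    have "s (r + Suc m * k) = s ((r + m * k) + k)" by (simp add: algebra_simps)
    also have "\<dots> = s (r + m * k)" using assms unfolding perlen_def by blast
    finally show ?case using Suc by simp
  qed
  have "s (j mod k + (j div k) * k) = s (j mod k)" by (rule a)
  then show ?thesis by (simp add: mod_div_mult_eq)
qed

lemma GL:
  "\<forall>f0 f1 x. Hyp I f0 f1 x \<longrightarrow> shortest (lseq f0 f1 x) n \<longrightarrow> valid_word (map (lseq f0 f1 x) [0..<n])"
proof (induction n rule: less_induct)
  case (less n)
  have IH: "\<forall>n'<n. \<forall>g0 g1 c. Hyp I g0 g1 c \<longrightarrow> shortest (lseq g0 g1 c) n' \<longrightarrow> valid_word (map (lseq g0 g1 c) [0..<n'])"
    using less by blast
  show ?case
  proof (intro allI impI)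
    fix f0 f1 x assume H: "Hyp I f0 f1 x" and sh: "shortest (lseq f0 f1 x) n"
    define s where "s = lseq f0 f1 x"
    define orb where "orb = thr_orbit f0 f1 x"
    have m0: "maps I f0" and m1: "maps I f1" and c0: "contr I f0" and c1: "contr I f1"
      and xI: "x \<in> I" using H unfolding Hyp_def by auto
    have w0: "wcontr I f0" and w1: "wcontr I f1" using c0 c1 contr_wcontr by auto
    have orbI: "\<And>j. orb j \<in> I" using orbit_in[OF H] unfolding orb_def by blast
    have n0: "0 < n" using shortest_pos[OF sh] .
    show "valid_word (map (lseq f0 f1 x) [0..<n])"
    proof (cases "n = 1")
      case True
      have "map s [0..<n] = [s 0]" using True by simp
      moreover have "s 0 = 0 \<or> s 0 = 1" unfolding s_def lseq_def by simp
      ultimately show ?thesis using valid_zero valid_one unfolding s_def by auto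
    next
      case False
      then have n2: "2 \<le> n" using n0 by simp
      have nc: "\<not> (\<forall>j. s j = c)" for c
      proof
        assume "\<forall>j. s j = c"
        then have "perlen s 1" unfolding perlen_def by simp
        then have "n \<le> 1" using sh unfolding shortest_def s_def by blast
        then show False using n2 by simp
      qed
      have ux: "f1 x < x"
      proof (rule ccontr)
        assume "\<not> f1 x < x"
        then have a: "x \<le> f1 x" by simp
        have "x \<le> orb j" for j
        proof (induction j)
          case 0 then show ?case using a unfolding orb_def by simp
        next
          case (Suc j)
          have "f1 x \<le> f1 (orb j)" using wcontr_le_iff[OF w1 xI orbI] Suc by simp
          then show ?case using Suc a unfolding orb_def by simp
        qed
        then have "\<forall>j. s j = 1" unfolding s_def lseq_def orb_def by simp
        then show False using nc by blast
      qed
      have xv: "x < f0 x"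
      proof (rule ccontr)
        assume "\<not> x < f0 x"
        then have a: "f0 x \<le> x" by simp
        have "orb j < x" for j
        proof (induction j)
          case 0 then show ?case using ux unfolding orb_def by simp
        next
          case (Suc j)
          have "f0 (orb j) < f0 x" using wcontr_less_iff[OF w0 orbI xI] Suc by simp
          then show ?case using Suc a unfolding orb_def by simp
        qed
        then have "\<forall>j. s j = 0" unfolding s_def lseq_def orb_def by (simp add: not_le)
        then show False using nc by blast
      qed
      have ex1: "\<exists>j. lseq f0 f1 x j = 1"
      proof (rule ccontr)
        assume "\<not> (\<exists>j. lseq f0 f1 x j = 1)"
        then have "\<forall>j. s j = 0" using lseq_01 unfolding s_def by blast
        then show False using nc by blast
      qed
      show ?thesis
      proof (cases "f1 (f0 x) \<le> x")
        case True show ?thesis by (rule caseA[OF IH H sh ux xv True ex1])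
      next
        case False then show ?thesis using caseB[OF IH H sh ux xv] by simp
      qed
    qed
  qed
qed



theorem mainTheorem8:
  fixes I :: "real set" and phi0 phi1 :: "real \<Rightarrow> real" and x :: real and tw :: "nat list"
  assumes "is_interval I"
    and "\<forall>y\<in>I. phi0 y \<in> I" and "\<forall>y\<in>I. phi1 y \<in> I"
    and "assumption_A2 I phi0 phi1"
    and "x \<in> I"
    and "is_threshold_word phi0 phi1 x tw"
  shows "valid_word tw"
proof -
  define f0 where "f0 = phi0"
  define f1 where "f1 = phi1"
  have H: "Hyp I f0 f1 x"
    using assms(1-5) unfolding Hyp_def maps_def contr_def assumption_A2_def f0_def f1_def by blast
  define s where "s = lseq f0 f1 x"
  define orb where "orb = thr_orbit f0 f1 x"
  have m0: "maps I f0" and m1: "maps I f1" and c0: "contr I f0" and c1: "contr I f1"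
    and xI: "x \<in> I" using H unfolding Hyp_def by auto
  have w0: "wcontr I f0" and w1: "wcontr I f1" using c0 c1 contr_wcontr by auto
  have orbI: "\<And>j. orb j \<in> I" using orbit_in[OF H] unfolding orb_def by blast
  have dr: "drives_orbit f0 f1 x tw" and mn: "\<And>w. drives_orbit f0 f1 x w \<Longrightarrow> length tw \<le> length w"
    using assms(6) unfolding is_threshold_word_def f0_def f1_def by auto
  have tw01: "set tw \<subseteq> {0, 1}" and twne: "tw \<noteq> []" using dr unfolding drives_orbit_def by auto
  have step: "orb (Suc j) = letter_map f0 f1 (s j) (orb j)" for j
    unfolding orb_def s_def lseq_def letter_map_def by simp
  show ?thesis
  proof (cases "length tw = 1")
    case True
    then obtain a where "tw = [a]" by (cases tw) auto
    moreover have "a = 0 \<or> a = 1" using tw01 calculation by auto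
    ultimately show ?thesis using valid_zero valid_one by auto
  next
    case False
    have "length tw \<noteq> 0" using twne by simp
    then have n2: "2 \<le> length tw" using False by linarith
    have nc: "\<not> drives_orbit f0 f1 x [a]" for a
      using mn[of "[a]"] n2 by auto
    have ux: "f1 x < x"
    proof (rule ccontr)
      assume "\<not> f1 x < x"
      then have a: "x \<le> f1 x" by simp
      have ge: "x \<le> orb j" for j
      proof (induction j)
        case 0 then show ?case using a unfolding orb_def by simp
      next
        case (Suc j)
        have "f1 x \<le> f1 (orb j)" using wcontr_le_iff[OF w1 xI orbI] Suc by simp
        then show ?case using Suc a unfolding orb_def by simp
      qed
      have "drives_orbit f0 f1 x [1]" unfolding drives_orbit_def letter_map_def
        using ge unfolding orb_def by simp
      then show False using nc by blast
    qed
    have xv: "x < f0 x"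
    proof (rule ccontr)
      assume "\<not> x < f0 x"
      then have a: "f0 x \<le> x" by simp
      have lt: "orb j < x" for j
      proof (induction j)
        case 0 then show ?case using ux unfolding orb_def by simp
      next
        case (Suc j)
        have "f0 (orb j) < f0 x" using wcontr_less_iff[OF w0 orbI xI] Suc by simp
        then show ?case using Suc a unfolding orb_def by simp
      qed
      have "drives_orbit f0 f1 x [0]" unfolding drives_orbit_def letter_map_def
        using lt unfolding orb_def by (auto simp: not_le dest: leD)
      then show False using nc by blast
    qed
    define u where "u = f1 x"
    define v where "v = f0 x"
    have uI: "u \<in> I" and vI: "v \<in> I" using m0 m1 xI unfolding maps_def u_def v_def by auto
    have bnd: "u \<le> orb j \<and> orb j < v" for j
    proof (induction j)
      case 0 then show ?case using ux xv unfolding orb_def u_def v_def by simp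
    next
      case (Suc j)
      have oI: "orb j \<in> I" by (rule orbI)
      show ?case
      proof (cases "x \<le> orb j")
        case True
        have a: "f1 x \<le> f1 (orb j)" using wcontr_le_iff[OF w1 xI oI] True by simp
        have b: "f1 (orb j) - f1 x \<le> orb j - x" using wcontr_nonexp[OF w1 xI oI True] .
        have "orb (Suc j) = f1 (orb j)" using True unfolding orb_def by simp
        then show ?thesis using a b Suc ux unfolding u_def v_def by simp
      next
        case False
        have a: "f0 (orb j) < f0 x" using wcontr_less_iff[OF w0 oI xI] False by simp
        have b: "f0 x - f0 (orb j) \<le> x - orb j" using wcontr_nonexp[OF w0 oI xI] False by simp
        have "orb (Suc j) = f0 (orb j)" using False unfolding orb_def by simp
        then show ?thesis using a b Suc xv unfolding u_def v_def by simp
      qed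
    qed
    have amb: "f1 (orb j) < f0 (orb j)" for j
    proof -
      have oI: "orb j \<in> I" by (rule orbI)
      show ?thesis
      proof (cases "x \<le> orb j")
        case True
        have b: "f1 (orb j) - f1 x \<le> orb j - x" using wcontr_nonexp[OF w1 xI oI True] .
        have a: "f0 x \<le> f0 (orb j)" using wcontr_le_iff[OF w0 xI oI] True by simp
        show ?thesis using a b ux bnd[of j] unfolding u_def v_def by simp
      next
        case False
        have a: "f1 (orb j) < f1 x" using wcontr_less_iff[OF w1 oI xI] False by simp
        have b: "f0 x - f0 (orb j) \<le> x - orb j" using wcontr_nonexp[OF w0 oI xI] False by simp
        show ?thesis using a b xv bnd[of j] unfolding u_def v_def by simp
      qed
    qed
    have s01: "s j = 0 \<or> s j = 1" for j unfolding s_def lseq_def by simp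
    have lm_inj: "a = b" if "a \<in> {0, 1}" "b \<in> {0,1}" "letter_map f0 f1 a (orb j) = letter_map f0 f1 b (orb j)" for a b :: nat and j
      using that amb[of j] unfolding letter_map_def by (auto split: if_splits)
    have drv: "s j = w ! (j mod length w)" if dw: "drives_orbit f0 f1 x w" for w j
    proof -
      have ne: "w \<noteq> []" and w01: "set w \<subseteq> {0,1}" using dw unfolding drives_orbit_def by auto
      have "w ! (j mod length w) \<in> set w" using ne by simp
      then have a: "w ! (j mod length w) \<in> {0,1}" using w01 by blast
      have "letter_map f0 f1 (w ! (j mod length w)) (orb j) = letter_map f0 f1 (s j) (orb j)"
        using dw step[of j] unfolding drives_orbit_def orb_def by simp
      then show ?thesis using lm_inj[OF a _ , of "s j" j] s01[of j] by auto
    qed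
    define n where "n = length tw"
    have n0: "0 < n" using twne unfolding n_def by simp
    have sh: "shortest s n"
      unfolding shortest_def
    proof (intro conjI allI impI)
      show "perlen s n" unfolding perlen_def
      proof (intro conjI allI)
        show "0 < n" by (rule n0)
        fix j show "s (j + n) = s j" using drv[OF dr, of "j + n"] drv[OF dr, of j] unfolding n_def by simp
      qed
      fix k assume pk: "perlen s k"
      define w where "w = map s [0..<k]"
      have k0: "0 < k" using pk unfolding perlen_def by simp
      have "drives_orbit f0 f1 x w" unfolding drives_orbit_def
      proof (intro conjI allI)
        show "w \<noteq> []" using k0 unfolding w_def by simp
        show "set w \<subseteq> {0, 1}"
        proof
          fix a assume "a \<in> set w"
          then obtain j where "a = s j" unfolding w_def by auto
          then show "a \<in> {0, 1}" using s01[of j] by simp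
        qed
        fix j
        have "w ! (j mod length w) = s j" using per_mod[OF pk, of j] k0 unfolding w_def by simp
        then show "thr_orbit f0 f1 x (Suc j) = letter_map f0 f1 (w ! (j mod length w)) (thr_orbit f0 f1 x j)"
          using step[of j] unfolding orb_def by simp
      qed
      then have "n \<le> length w" using mn unfolding n_def by blast
      then show "n \<le> k" unfolding w_def by simp
    qed
    have "valid_word (map s [0..<n])" using GL[of I n] H sh unfolding s_def by blast
    moreover have "map s [0..<n] = tw"
    proof (rule nth_equalityI)
      show "length (map s [0..<n]) = length tw" unfolding n_def by simp
      fix i assume "i < length (map s [0..<n])"
      then have i: "i < n" by simp
      then show "map s [0..<n] ! i = tw ! i" using drv[OF dr, of i] unfolding n_def by simp
    qed
    ultimately show ?thesis by simp
  qed
qed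

end
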